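(* Let $\lambda, v, u$ be positive integers and let $M=m_1,m_2,\ldots,m_t$ be a sequence of integers with $m_1\leq m_2\leq\cdots\leq m_t$ and $m_i\equiv 0\pmod{2}$ for all $i\in\{1,2,\ldots,t\}$. If there exists an $(M)$-cycle decomposition of $\lambda K_{v,u}$, then all of the following hold: (a) $m_t\leq 2\min(\{v,u\})$; (b) $\lambda v\equiv \lambda u\equiv 0\pmod{2}$; (c) $t\leq \frac{\lambda}{2}vu-m_t+2$ if $\lambda$ is even; (d) $2\nu_2(M)\leq (\lambda-1)vu$ if $\lambda$ is odd.
   Context: $\lambda K_{v,u}$ denotes the multigraph with vertex set $V\cup U$, where $V,U$ are disjoint, $|V|=v$, $|U|=u$, in which every $x\in V$ and $y\in U$ are joined by exactly $\lambda$ parallel edges and there are no other edges. For $m\geq 2$, an $m$-cycle is a subgraph consisting of $m$ distinct vertices $x_0,\ldots,x_{m-1}$ and one edge joining $x_i$ and $x_{i+1}$ for each $i$ (indices mod $m$); in particular a $2$-cycle consists of two parallel edges between two vertices. An $(M)$-cycle decomposition of a multigraph $G$, for $M=m_1,\ldots,m_t$, is a partition of the edge set of $G$ into $t$ cycles of lengths $m_1,\ldots,m_t$ respectively. $\nu_k(M)$ denotes the number of indices $i$ with $m_i=k$. *)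

theory Defs
  imports Complex_Main
begin

(* Vertices of lambda K_{v,u}: Inl a (a < v) form V, Inr b (b < u) form U.
   Edges: triples (a, b, k) with a < v, b < u, k < lambda; the k-th of the
   lambda parallel edges joining Inl a and Inr b. *)

type_synonym vert = "nat + nat"
type_synonym edge = "nat \<times> nat \<times> nat"

definition lKvu_edges :: "nat \<Rightarrow> nat \<Rightarrow> nat \<Rightarrow> edge set" where
  "lKvu_edges lam v u = {(a, b, k). a < v \<and> b < u \<and> k < lam}"

definition joins :: "edge \<Rightarrow> vert \<Rightarrow> vert \<Rightarrow> bool" where
  "joins e x y \<longleftrightarrow> (case e of (a, b, k) \<Rightarrow> {x, y} = {Inl a, Inr b})"

definition is_cycle :: "nat \<Rightarrow> edge set \<Rightarrow> bool" where
  "is_cycle m C \<longleftrightarrow> m \<ge> 2 \<and>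
     (\<exists>xs :: vert list. \<exists>es :: edge list.
        length xs = m \<and> distinct xs \<and> length es = m \<and> distinct es \<and> set es = C \<and>
        (\<forall>i<m. joins (es ! i) (xs ! i) (xs ! ((i + 1) mod m))))"

definition cycle_decomposition :: "edge set \<Rightarrow> nat list \<Rightarrow> bool" where
  "cycle_decomposition E ms \<longleftrightarrow>
     (\<exists>Cs :: edge set list. length Cs = length ms \<and>
        (\<forall>i<length ms. is_cycle (ms ! i) (Cs ! i)) \<and>
        (\<forall>i<length ms. \<forall>j<length ms. i \<noteq> j \<longrightarrow> Cs ! i \<inter> Cs ! j = {}) \<and>
        (\<Union>i<length ms. Cs ! i) = E)"

definition nu :: "nat \<Rightarrow> nat list \<Rightarrow> nat" where
  "nu k ms = card {i. i < length ms \<and> ms ! i = k}"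

end

theory Submission
  imports Defs
begin


definition ends :: "edge \<Rightarrow> vert set" where
  "ends e = (case e of (a, b, k) \<Rightarrow> {Inl a, Inr b})"

lemma joins_ends: "joins e x y \<Longrightarrow> w \<in> ends e \<longleftrightarrow> w = x \<or> w = y"
  unfolding joins_def ends_def by (cases e) auto

lemma ends_Inl: "Inl a \<in> ends e \<longleftrightarrow> fst e = a"
  unfolding ends_def by (cases e) auto

lemma ends_Inr: "Inr b \<in> ends e \<longleftrightarrow> fst (snd e) = b"
  unfolding ends_def by (cases e) auto

lemma deg_data:
  assumes m: "m \<ge> 2" and lx: "length xs = m" and dx: "distinct xs" and le: "length es = m"
    and de: "distinct es" and J: "\<forall>i<m. joins (es ! i) (xs ! i) (xs ! (Suc i mod m))"
  shows "card {e \<in> set es. w \<in> ends e} = (if w \<in> set xs then 2 else 0)"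
proof -
  have eq: "{e \<in> set es. w \<in> ends e} = (\<lambda>i. es ! i) ` {i. i < m \<and> (xs ! i = w \<or> xs ! (Suc i mod m) = w)}"
  proof (rule set_eqI, rule iffI)
    fix e assume "e \<in> {e \<in> set es. w \<in> ends e}"
    then obtain i where i: "i < m" "e = es ! i" "w \<in> ends e" using le by (auto simp: in_set_conv_nth)
    then show "e \<in> (\<lambda>i. es ! i) ` {i. i < m \<and> (xs ! i = w \<or> xs ! (Suc i mod m) = w)}"
      using joins_ends[OF J[rule_format, OF i(1)]] by auto
  next
    fix e assume "e \<in> (\<lambda>i. es ! i) ` {i. i < m \<and> (xs ! i = w \<or> xs ! (Suc i mod m) = w)}"
    then obtain i where i: "i < m" "e = es ! i" "xs ! i = w \<or> xs ! (Suc i mod m) = w" by auto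
    then show "e \<in> {e \<in> set es. w \<in> ends e}"
      using joins_ends[OF J[rule_format, OF i(1)]] le by auto
  qed
  show ?thesis
  proof (cases "w \<in> set xs")
    case False
    have "{i. i < m \<and> (xs ! i = w \<or> xs ! (Suc i mod m) = w)} = {}"
      using False lx m by (auto simp: in_set_conv_nth)
    then show ?thesis using eq False by simp
  next
    case True
    then obtain p where p: "p < m" "xs ! p = w" using lx by (auto simp: in_set_conv_nth)
    define q where "q = (if p = 0 then m - 1 else p - 1)"
    have q: "q < m" "q \<noteq> p" using p m unfolding q_def by auto
    have "{i. i < m \<and> (xs ! i = w \<or> xs ! (Suc i mod m) = w)} = {p, q}"
    proof (rule set_eqI, rule iffI)
      fix i assume "i \<in> {i. i < m \<and> (xs ! i = w \<or> xs ! (Suc i mod m) = w)}"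
      then have i: "i < m" "xs ! i = w \<or> xs ! (Suc i mod m) = w" by auto
      have sm: "Suc i mod m < m" using m by simp
      from i(2) show "i \<in> {p, q}"
      proof
        assume "xs ! i = w" then have "i = p" using nth_eq_iff_index_eq[OF dx] i(1) p lx by auto
        then show ?thesis by simp
      next
        assume "xs ! (Suc i mod m) = w" then have "Suc i mod m = p"
          using nth_eq_iff_index_eq[OF dx, of "Suc i mod m" p] sm p lx by auto
        then have "i = q" unfolding q_def using i(1) m
          by (cases "Suc i = m") auto
        then show ?thesis by simp
      qed
    next
      fix i assume "i \<in> {p, q}"
      moreover have "Suc q mod m = p" unfolding q_def using p m by auto
      ultimately show "i \<in> {i. i < m \<and> (xs ! i = w \<or> xs ! (Suc i mod m) = w)}"
        using p q by auto
    qed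
    moreover have "es ! p \<noteq> es ! q" using nth_eq_iff_index_eq[OF de] p q le by auto
    ultimately show ?thesis using eq True by simp
  qed
qed

lemma cyc_finite: "is_cycle m C \<Longrightarrow> finite C \<and> card C = m"
  unfolding is_cycle_def by (auto simp: distinct_card)

lemma cyc_deg: assumes "is_cycle m C"
  shows "card {e \<in> C. w \<in> ends e} = 0 \<or> card {e \<in> C. w \<in> ends e} = 2"
proof -
  obtain xs es where H: "m \<ge> 2" "length xs = m" "distinct xs" "length es = m" "distinct es"
    "set es = C" "\<forall>i<m. joins (es ! i) (xs ! i) (xs ! ((i + 1) mod m))"
    using assms unfolding is_cycle_def by (elim conjE exE) (rule that, assumption+)
  have J: "\<forall>i<m. joins (es ! i) (xs ! i) (xs ! (Suc i mod m))" using H(7) by simp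
  show ?thesis using deg_data[OF H(1-5) J, of w] H(6) by simp
qed

lemma cyc_deg_Inl: assumes "is_cycle m C"
  shows "card {e \<in> C. fst e = a} = (if a \<in> fst ` C then 2 else 0)"
proof -
  have f: "finite C" using cyc_finite[OF assms] by simp
  have "card {e \<in> C. fst e = a} = 0 \<or> card {e \<in> C. fst e = a} = 2"
    using cyc_deg[OF assms, of "Inl a"] by (simp add: ends_Inl)
  moreover have "{e \<in> C. fst e = a} = {} \<longleftrightarrow> a \<notin> fst ` C" by force
  ultimately show ?thesis using f by (cases "a \<in> fst ` C") auto
qed

lemma cyc_deg_Inr: assumes "is_cycle m C"
  shows "card {e \<in> C. fst (snd e) = b} = (if b \<in> (\<lambda>e. fst (snd e)) ` C then 2 else 0)"
proof -
  have f: "finite C" using cyc_finite[OF assms] by simp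
  have "card {e \<in> C. fst (snd e) = b} = 0 \<or> card {e \<in> C. fst (snd e) = b} = 2"
    using cyc_deg[OF assms, of "Inr b"] by (simp add: ends_Inr)
  moreover have "{e \<in> C. fst (snd e) = b} = {} \<longleftrightarrow> b \<notin> (\<lambda>e. fst (snd e)) ` C" by force
  ultimately show ?thesis using f by (cases "b \<in> (\<lambda>e. fst (snd e)) ` C") auto
qed

lemma card_fibers:
  assumes "finite C"
  shows "card C = (\<Sum>a\<in>f ` C. card {e \<in> C. f e = a})"
proof -
  have "C = (\<Union>a\<in>f ` C. {e \<in> C. f e = a})" by auto
  then have "card C = card (\<Union>a\<in>f ` C. {e \<in> C. f e = a})" by simp
  also have "\<dots> = (\<Sum>a\<in>f ` C. card {e \<in> C. f e = a})"
    by (rule card_UN_disjoint) (use assms in auto)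
  finally show ?thesis .
qed

lemma cyc_half_Inl: assumes "is_cycle m C" shows "m = 2 * card (fst ` C)"
proof -
  have f: "finite C" and c: "card C = m" using cyc_finite[OF assms] by auto
  have "card C = (\<Sum>a\<in>fst ` C. card {e \<in> C. fst e = a})" by (rule card_fibers[OF f])
  also have "\<dots> = (\<Sum>a\<in>fst ` C. 2)" by (rule sum.cong) (auto simp: cyc_deg_Inl[OF assms])
  finally show ?thesis using c by simp
qed

lemma cyc_half_Inr: assumes "is_cycle m C" shows "m = 2 * card ((\<lambda>e. fst (snd e)) ` C)"
proof -
  have f: "finite C" and c: "card C = m" using cyc_finite[OF assms] by auto
  have "card C = (\<Sum>a\<in>(\<lambda>e. fst (snd e)) ` C. card {e \<in> C. fst (snd e) = a})" by (rule card_fibers[OF f])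
  also have "\<dots> = (\<Sum>a\<in>(\<lambda>e. fst (snd e)) ` C. 2)" by (rule sum.cong) (auto simp: cyc_deg_Inr[OF assms])
  finally show ?thesis using c by simp
qed



lemma split_data:
  assumes m: "m \<ge> 2" and lx: "length xs = m" and dx: "distinct xs" and le: "length es = m"
    and de: "distinct es" and J: "\<forall>i<m. joins (es ! i) (xs ! i) (xs ! (Suc i mod m))"
    and B1: "fst ` set es \<inter> B \<noteq> {}" and B2: "\<not> fst ` set es \<subseteq> B"
  shows "\<exists>b. card {e \<in> set es. fst (snd e) = b \<and> fst e \<in> B} = 1"
proof -
  define g where "g i = (fst (es ! i) \<in> B)" for i
  have "\<exists>i<m. g i \<noteq> g (Suc i mod m)"
  proof (rule ccontr)
    assume "\<not> ?thesis"
    then have H: "\<forall>i<m. g i = g (Suc i mod m)" by blast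
    have "\<forall>i<m. g i = g 0"
    proof (intro allI impI)
      fix i assume "i < m" then show "g i = g 0"
      proof (induction i)
        case 0 then show ?case by simp
      next
        case (Suc i)
        then have i1: "i < m" "Suc i mod m = Suc i" by simp_all
        have "g (Suc i mod m) = g i" using H[rule_format, OF i1(1)] by simp
        then show ?case using Suc by simp
      qed
    qed
    then have G: "\<forall>i<m. g i = g 0" .
    have "\<forall>e\<in>set es. (fst e \<in> B) = g 0"
    proof
      fix e assume "e \<in> set es"
      then obtain i where i: "i < length es" "e = es ! i" by (metis in_set_conv_nth)
      then have "g i = g 0" using G le by blast
      then show "(fst e \<in> B) = g 0" using i unfolding g_def by simp
    qed
    then show False using B1 B2 by (cases "g 0") auto
  qed
  then obtain i where i: "i < m" "g i \<noteq> g (Suc i mod m)" by blast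
  define j where "j = Suc i mod m"
  have j: "j < m" using m unfolding j_def by simp
  have Ji: "joins (es ! i) (xs ! i) (xs ! j)" using J i(1) unfolding j_def by auto
  have Jj: "joins (es ! j) (xs ! j) (xs ! (Suc j mod m))" using J j by auto
  show ?thesis
  proof (cases "xs ! j")
    case (Inl a)
    have "fst (es ! i) = a" using joins_ends[OF Ji, of "Inl a"] Inl by (simp add: ends_Inl)
    moreover have "fst (es ! j) = a" using joins_ends[OF Jj, of "Inl a"] Inl by (simp add: ends_Inl)
    ultimately show ?thesis using i(2) unfolding g_def j_def by simp
  next
    case (Inr b)
    have inxs: "Inr b \<in> set xs" using Inr j lx by (metis nth_mem)
    have c2: "card {e \<in> set es. Inr b \<in> ends e} = 2"
      using deg_data[OF m lx dx le de J, of "Inr b"] inxs by simp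
    have ei: "es ! i \<in> {e \<in> set es. Inr b \<in> ends e}"
      using joins_ends[OF Ji, of "Inr b"] Inr i(1) le by auto
    have ej: "es ! j \<in> {e \<in> set es. Inr b \<in> ends e}"
      using joins_ends[OF Jj, of "Inr b"] Inr j le by auto
    have neq: "es ! i \<noteq> es ! j" using i(2) unfolding g_def j_def by auto
    have "{es ! i, es ! j} \<subseteq> {e \<in> set es. Inr b \<in> ends e}" using ei ej by auto
    moreover have "card {es ! i, es ! j} = 2" using neq by simp
    ultimately have S: "{e \<in> set es. Inr b \<in> ends e} = {es ! i, es ! j}"
      using c2 card_subset_eq[of "{e \<in> set es. Inr b \<in> ends e}" "{es ! i, es ! j}"] by auto
    have "{e \<in> set es. fst (snd e) = b \<and> fst e \<in> B} = {e \<in> {es ! i, es ! j}. fst e \<in> B}"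
      using S by (auto simp: ends_Inr)
    moreover have "card {e \<in> {es ! i, es ! j}. fst e \<in> B} = 1"
    proof -
      have gi: "(fst (es ! i) \<in> B) \<noteq> (fst (es ! j) \<in> B)" using i(2) unfolding g_def j_def .
      show ?thesis
      proof (cases "fst (es ! i) \<in> B")
        case True
        then have "{e \<in> {es ! i, es ! j}. fst e \<in> B} = {es ! i}" using gi by blast
        then show ?thesis by simp
      next
        case False
        then have "{e \<in> {es ! i, es ! j}. fst e \<in> B} = {es ! j}" using gi by blast
        then show ?thesis by simp
      qed
    qed
    ultimately have "card {e \<in> set es. fst (snd e) = b \<and> fst e \<in> B} = 1" by simp
    then show ?thesis by blast
  qed
qed

lemma cyc_split: assumes "is_cycle m C" "fst ` C \<inter> B \<noteq> {}" "\<not> fst ` C \<subseteq> B"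
  shows "\<exists>b. card {e \<in> C. fst (snd e) = b \<and> fst e \<in> B} = 1"
proof -
  obtain xs es where H: "m \<ge> 2" "length xs = m" "distinct xs" "length es = m" "distinct es"
    "set es = C" "\<forall>i<m. joins (es ! i) (xs ! i) (xs ! ((i + 1) mod m))"
    using assms(1) unfolding is_cycle_def by (elim conjE exE) (rule that, assumption+)
  have J: "\<forall>i<m. joins (es ! i) (xs ! i) (xs ! (Suc i mod m))" using H(7) by simp
  show ?thesis using split_data[OF H(1-5) J, of B] H(6) assms(2,3) by simp
qed

lemma conn_bound:
  "finite J \<Longrightarrow> (\<forall>j\<in>J. finite (S j)) \<Longrightarrow> finite A \<Longrightarrow>
   (\<forall>B. (\<forall>j\<in>J. S j \<subseteq> B \<or> S j \<inter> B = {}) \<longrightarrow> A \<subseteq> B \<or> A \<inter> B = {}) \<Longrightarrow>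
   card A \<le> 1 + (\<Sum>j\<in>J. card (S j) - 1)"
proof (induction "card J" arbitrary: J S rule: less_induct)
  case less
  show ?case
  proof (cases "\<exists>i\<in>J. \<exists>j\<in>J. i \<noteq> j \<and> S i \<inter> S j \<noteq> {}")
    case True
    then obtain i j where ij: "i \<in> J" "j \<in> J" "i \<noteq> j" "S i \<inter> S j \<noteq> {}" by blast
    define J' where "J' = J - {j}"
    define S' where "S' = S(i := S i \<union> S j)"
    have cJ: "card J' < card J" unfolding J'_def using ij less.prems(1) by (metis card_Diff1_less)
    have fJ: "finite J'" using less.prems(1) unfolding J'_def by simp
    have fS: "\<forall>k\<in>J'. finite (S' k)" using less.prems(2) ij unfolding S'_def J'_def by auto
    have conn: "\<forall>B. (\<forall>k\<in>J'. S' k \<subseteq> B \<or> S' k \<inter> B = {}) \<longrightarrow> A \<subseteq> B \<or> A \<inter> B = {}"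
    proof (intro allI impI)
      fix B assume H: "\<forall>k\<in>J'. S' k \<subseteq> B \<or> S' k \<inter> B = {}"
      have "\<forall>k\<in>J. S k \<subseteq> B \<or> S k \<inter> B = {}"
      proof
        fix k assume k: "k \<in> J"
        show "S k \<subseteq> B \<or> S k \<inter> B = {}"
        proof (cases "k = i \<or> k = j")
          case True
          have "i \<in> J'" using ij unfolding J'_def by auto
          then have "S' i \<subseteq> B \<or> S' i \<inter> B = {}" using H by blast
          then have "S i \<union> S j \<subseteq> B \<or> (S i \<union> S j) \<inter> B = {}" unfolding S'_def by simp
          then show ?thesis using True by auto
        next
          case False
          then have "k \<in> J'" "S' k = S k" using k unfolding J'_def S'_def by auto
          then show ?thesis using H by metis
        qed
      qed
      then show "A \<subseteq> B \<or> A \<inter> B = {}" by (rule mp[OF spec[OF less.prems(4)]])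
    qed
    have IH: "card A \<le> 1 + (\<Sum>k\<in>J'. card (S' k) - 1)"
      using less.hyps[OF cJ fJ fS less.prems(3) conn] .
    have iJ': "i \<in> J'" using ij unfolding J'_def by auto
    have "(\<Sum>k\<in>J'. card (S' k) - 1) = (card (S i \<union> S j) - 1) + (\<Sum>k\<in>J' - {i}. card (S' k) - 1)"
      using sum.remove[OF fJ iJ', of "\<lambda>k. card (S' k) - 1"] unfolding S'_def by (simp only: fun_upd_same)
    also have "(\<Sum>k\<in>J' - {i}. card (S' k) - 1) = (\<Sum>k\<in>J - {i} - {j}. card (S k) - 1)"
      unfolding J'_def S'_def by (rule sum.cong) auto
    also have "card (S i \<union> S j) - 1 \<le> (card (S i) - 1) + (card (S j) - 1)"
    proof -
      have f: "finite (S i)" "finite (S j)" using less.prems(2) ij by auto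
      have "card (S i \<union> S j) + card (S i \<inter> S j) = card (S i) + card (S j)"
        using card_Un_Int[OF f] by simp
      moreover have "card (S i \<inter> S j) \<ge> 1" using ij(4) f by (simp add: Suc_leI card_gt_0_iff)
      moreover have ne: "S i \<noteq> {}" "S j \<noteq> {}" using ij(4) by auto
      moreover have "card (S i) \<ge> 1" "card (S j) \<ge> 1" using ne f
        by (simp_all add: Suc_leI card_gt_0_iff)
      ultimately show ?thesis by linarith
    qed
    finally have A: "(\<Sum>k\<in>J'. card (S' k) - 1) \<le> (card (S i) - 1) + (card (S j) - 1) + (\<Sum>k\<in>J - {i} - {j}. card (S k) - 1)"
      by simp
    have "(\<Sum>k\<in>J. card (S k) - 1) = (card (S i) - 1) + (\<Sum>k\<in>J - {i}. card (S k) - 1)"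
      using sum.remove[OF less.prems(1) ij(1)] by simp
    also have "(\<Sum>k\<in>J - {i}. card (S k) - 1) = (card (S j) - 1) + (\<Sum>k\<in>J - {i} - {j}. card (S k) - 1)"
      using sum.remove[of "J - {i}" j] less.prems(1) ij by simp
    finally show ?thesis using IH A by linarith
  next
    case False
    show ?thesis
    proof (cases "A = {}")
      case True then show ?thesis by simp
    next
      case False2: False
      then obtain a where a: "a \<in> A" by blast
      show ?thesis
      proof (cases "\<exists>j\<in>J. a \<in> S j")
        case True
        then obtain j where j: "j \<in> J" "a \<in> S j" by blast
        have "\<forall>k\<in>J. S k \<subseteq> S j \<or> S k \<inter> S j = {}"
        proof
          fix k assume k: "k \<in> J"
          show "S k \<subseteq> S j \<or> S k \<inter> S j = {}"
          proof (cases "k = j")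
            case True then show ?thesis by simp
          next
            case False
            then have "S k \<inter> S j = {}" using \<open>\<not> (\<exists>i\<in>J. \<exists>j\<in>J. i \<noteq> j \<and> S i \<inter> S j \<noteq> {})\<close> j k by blast
            then show ?thesis by simp
          qed
        qed
        then have "A \<subseteq> S j \<or> A \<inter> S j = {}" by (rule mp[OF spec[OF less.prems(4)]])
        then have "A \<subseteq> S j" using a j by blast
        then have "card A \<le> card (S j)" using less.prems(2) j by (simp add: card_mono)
        moreover have "card (S j) - 1 \<le> (\<Sum>k\<in>J. card (S k) - 1)"
          using member_le_sum[OF j(1), of "\<lambda>k. card (S k) - 1"] less.prems(1) by simp
        ultimately show ?thesis by linarith
      next
        case False3: False
        have "\<forall>k\<in>J. S k \<subseteq> {a} \<or> S k \<inter> {a} = {}" using False3 by blast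
        then have "A \<subseteq> {a} \<or> A \<inter> {a} = {}" by (rule mp[OF spec[OF less.prems(4)]])
        then have "A \<subseteq> {a}" using a by blast
        then have "card A \<le> 1" using card_mono[of "{a}" A] by simp
        then show ?thesis by simp
      qed
    qed
  qed
qed



lemma two_cycle_even: assumes "is_cycle 2 C"
  shows "even (card {e \<in> C. fst e = a \<and> fst (snd e) = b})"
proof -
  have f: "finite C" and c: "card C = 2" using cyc_finite[OF assms] by auto
  have "card (fst ` C) = 1" using cyc_half_Inl[OF assms] by simp
  then obtain a0 where a0: "fst ` C = {a0}" using card_1_singletonE by blast
  have "card ((\<lambda>e. fst (snd e)) ` C) = 1" using cyc_half_Inr[OF assms] by simp
  then obtain b0 where b0: "(\<lambda>e. fst (snd e)) ` C = {b0}" using card_1_singletonE by blast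
  have "\<forall>e\<in>C. fst e = a0 \<and> fst (snd e) = b0" using a0 b0 by blast
  then have "{e \<in> C. fst e = a \<and> fst (snd e) = b} = (if a = a0 \<and> b = b0 then C else {})" by auto
  then show ?thesis using c by simp
qed

lemma E_eq: "lKvu_edges lam v u = {..<v} \<times> {..<u} \<times> {..<lam}"
  unfolding lKvu_edges_def by auto

lemma E_finite: "finite (lKvu_edges lam v u)" unfolding E_eq by simp

lemma E_card: "card (lKvu_edges lam v u) = v * (u * lam)" unfolding E_eq by (simp add: card_cartesian_product)

lemma E_fiber_Inr: assumes "b < u"
  shows "card {e \<in> lKvu_edges lam v u. fst (snd e) = b \<and> fst e \<in> B} = card (B \<inter> {..<v}) * lam"
proof -
  have "{e \<in> lKvu_edges lam v u. fst (snd e) = b \<and> fst e \<in> B} = (B \<inter> {..<v}) \<times> {b} \<times> {..<lam}"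
    unfolding E_eq using assms by auto
  then show ?thesis by (simp add: card_cartesian_product)
qed

lemma E_fiber_Inl: assumes "a < v"
  shows "card {e \<in> lKvu_edges lam v u. fst e = a} = u * lam"
proof -
  have "{e \<in> lKvu_edges lam v u. fst e = a} = {a} \<times> {..<u} \<times> {..<lam}"
    unfolding E_eq using assms by auto
  then show ?thesis by (simp add: card_cartesian_product)
qed

lemma E_fiber_pair: assumes "a < v" "b < u"
  shows "card {e \<in> lKvu_edges lam v u. fst e = a \<and> fst (snd e) = b} = lam"
proof -
  have "{e \<in> lKvu_edges lam v u. fst e = a \<and> fst (snd e) = b} = {a} \<times> {b} \<times> {..<lam}"
    unfolding E_eq using assms by auto
  then show ?thesis by (simp add: card_cartesian_product)
qed

lemma decomp_card:
  assumes fin: "\<forall>i<t. finite (Cs ! i)"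
    and disj: "\<forall>i<t. \<forall>j<t. i \<noteq> j \<longrightarrow> Cs ! i \<inter> Cs ! j = {}"
    and un: "(\<Union>i<t. Cs ! i) = E"
  shows "card {e \<in> E. P e} = (\<Sum>i<t. card {e \<in> Cs ! i. P e})"
proof -
  have "{e \<in> E. P e} = (\<Union>i\<in>{..<t}. {e \<in> Cs ! i. P e})" using un by auto
  then have "card {e \<in> E. P e} = card (\<Union>i\<in>{..<t}. {e \<in> Cs ! i. P e})" by simp
  also have "\<dots> = (\<Sum>i<t. card {e \<in> Cs ! i. P e})"
    by (rule card_UN_disjoint) (use fin disj in auto)
  finally show ?thesis .
qed



theorem theorem2:
  fixes lam v u :: nat and ms :: "nat list"
  assumes "lam > 0" and "v > 0" and "u > 0"
    and "sorted ms"
    and "\<forall>i<length ms. even (ms ! i)"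
    and "cycle_decomposition (lKvu_edges lam v u) ms"
  shows "last ms \<le> 2 * min v u \<and>
         even (lam * v) \<and> even (lam * u) \<and>
         (even lam \<longrightarrow> real (length ms) \<le> real lam / 2 * real v * real u - real (last ms) + 2) \<and>
         (odd lam \<longrightarrow> 2 * nu 2 ms \<le> (lam - 1) * v * u)"
proof -
  define E where "E = lKvu_edges lam v u"
  define t where "t = length ms"
  obtain Cs where lC: "length Cs = t" and cyc: "\<forall>i<t. is_cycle (ms ! i) (Cs ! i)"
    and disj: "\<forall>i<t. \<forall>j<t. i \<noteq> j \<longrightarrow> Cs ! i \<inter> Cs ! j = {}"
    and un: "(\<Union>i<t. Cs ! i) = E"
    using assms(6) unfolding cycle_decomposition_def E_def t_def by blast
  have fin: "\<forall>i<t. finite (Cs ! i)" using cyc cyc_finite by blast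
  have sub: "\<And>i. i < t \<Longrightarrow> Cs ! i \<subseteq> E" using un by blast
  have DC: "\<And>P. card {e \<in> E. P e} = (\<Sum>i<t. card {e \<in> Cs ! i. P e})"
    by (rule decomp_card[OF fin disj un])
  have ms2: "\<And>i. i < t \<Longrightarrow> ms ! i \<ge> 2" using cyc unfolding is_cycle_def by blast
  have "(0, 0, 0) \<in> E" unfolding E_def lKvu_edges_def using assms(1-3) by simp
  then have tpos: "t > 0" using un by auto
  define p where "p = t - 1"
  have p: "p < t" using tpos unfolding p_def by simp
  have lastp: "last ms = ms ! p" unfolding p_def t_def using tpos t_def
    by (simp add: last_conv_nth)
  have cycp: "is_cycle (ms ! p) (Cs ! p)" using cyc p by blast
  have a1: "ms ! p \<le> 2 * v"
  proof -
    have "fst ` (Cs ! p) \<subseteq> {..<v}" using sub[OF p] unfolding E_def E_eq by auto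
    then have "card (fst ` (Cs ! p)) \<le> v" by (metis card_lessThan card_mono finite_lessThan)
    then show ?thesis using cyc_half_Inl[OF cycp] by simp
  qed
  have a2: "ms ! p \<le> 2 * u"
  proof -
    have "(\<lambda>e. fst (snd e)) ` (Cs ! p) \<subseteq> {..<u}" using sub[OF p] unfolding E_def E_eq by auto
    then have "card ((\<lambda>e. fst (snd e)) ` (Cs ! p)) \<le> u" by (metis card_lessThan card_mono finite_lessThan)
    then show ?thesis using cyc_half_Inr[OF cycp] by simp
  qed
  have b1: "even (lam * v)"
  proof -
    have "card {e \<in> E. fst (snd e) = 0 \<and> fst e \<in> UNIV} = card (UNIV \<inter> {..<v}) * lam"
      unfolding E_def using E_fiber_Inr assms(3) by blast
    then have "lam * v = (\<Sum>i<t. card {e \<in> Cs ! i. fst (snd e) = 0 \<and> fst e \<in> UNIV})"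
      using DC by simp
    also have "even \<dots>"
    proof (rule dvd_sum)
      fix i assume "i \<in> {..<t}"
      then show "even (card {e \<in> Cs ! i. fst (snd e) = 0 \<and> fst e \<in> UNIV})"
        using cyc_deg_Inr[of "ms ! i" "Cs ! i" 0] cyc by simp
    qed
    finally show ?thesis .
  qed
  have b2: "even (lam * u)"
  proof -
    have "card {e \<in> E. fst e = 0} = u * lam"
      unfolding E_def using E_fiber_Inl assms(2) by blast
    then have "lam * u = (\<Sum>i<t. card {e \<in> Cs ! i. fst e = 0})"
      using DC by simp
    also have "even \<dots>"
    proof (rule dvd_sum)
      fix i assume "i \<in> {..<t}"
      then show "even (card {e \<in> Cs ! i. fst e = 0})"
        using cyc_deg_Inl[of "ms ! i" "Cs ! i" 0] cyc by simp
    qed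
    finally show ?thesis .
  qed
  have tot: "(\<Sum>i<t. ms ! i) = v * (u * lam)"
  proof -
    have "card {e \<in> E. True} = v * (u * lam)" unfolding E_def using E_card by simp
    moreover have "card {e \<in> E. True} = (\<Sum>i<t. card {e \<in> Cs ! i. True})" by (rule DC)
    moreover have "(\<Sum>i<t. card {e \<in> Cs ! i. True}) = (\<Sum>i<t. ms ! i)"
    proof (rule sum.cong)
      fix i assume "i \<in> {..<t}"
      then have "card (Cs ! i) = ms ! i" using cyc cyc_finite by blast
      then show "card {e \<in> Cs ! i. True} = ms ! i" by simp
    qed simp
    ultimately show ?thesis by simp
  qed
  have c: "even lam \<longrightarrow> real t \<le> real lam / 2 * real v * real u - real (ms ! p) + 2"
  proof
    assume ev: "even lam"
    define J where "J = {..<t} - {p}"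
    define S where "S i = fst ` (Cs ! i)" for i
    have finJ: "finite J" unfolding J_def by simp
    have finS: "\<forall>j\<in>J. finite (S j)" unfolding S_def J_def using fin by auto
    have finA: "finite (S p)" unfolding S_def using fin p by auto
    have conn: "\<forall>B. (\<forall>j\<in>J. S j \<subseteq> B \<or> S j \<inter> B = {}) \<longrightarrow> S p \<subseteq> B \<or> S p \<inter> B = {}"
    proof (intro allI impI)
      fix B assume resp: "\<forall>j\<in>J. S j \<subseteq> B \<or> S j \<inter> B = {}"
      show "S p \<subseteq> B \<or> S p \<inter> B = {}"
      proof (rule ccontr)
        assume "\<not> (S p \<subseteq> B \<or> S p \<inter> B = {})"
        then obtain b where b: "card {e \<in> Cs ! p. fst (snd e) = b \<and> fst e \<in> B} = 1"
          using cyc_split[OF cycp, of B] unfolding S_def by blast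
        then have "{e \<in> Cs ! p. fst (snd e) = b \<and> fst e \<in> B} \<noteq> {}" by (metis card.empty zero_neq_one)
        then obtain e where e: "e \<in> Cs ! p" "fst (snd e) = b" by blast
        have bu: "b < u" using e sub[OF p] unfolding E_def E_eq by auto
        have "card {e \<in> E. fst (snd e) = b \<and> fst e \<in> B} = card (B \<inter> {..<v}) * lam"
          unfolding E_def using E_fiber_Inr bu by blast
        then have evs: "even (\<Sum>i<t. card {e \<in> Cs ! i. fst (snd e) = b \<and> fst e \<in> B})"
          using DC ev by simp
        have "(\<Sum>i<t. card {e \<in> Cs ! i. fst (snd e) = b \<and> fst e \<in> B}) =
            card {e \<in> Cs ! p. fst (snd e) = b \<and> fst e \<in> B} + (\<Sum>i\<in>J. card {e \<in> Cs ! i. fst (snd e) = b \<and> fst e \<in> B})"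
          unfolding J_def using sum.remove[of "{..<t}" p] p by simp
        moreover have "even (\<Sum>i\<in>J. card {e \<in> Cs ! i. fst (snd e) = b \<and> fst e \<in> B})"
        proof (rule dvd_sum)
          fix i assume i: "i \<in> J"
          then have it: "i < t" unfolding J_def by simp
          show "even (card {e \<in> Cs ! i. fst (snd e) = b \<and> fst e \<in> B})"
          proof (cases "S i \<subseteq> B")
            case True
            then have "{e \<in> Cs ! i. fst (snd e) = b \<and> fst e \<in> B} = {e \<in> Cs ! i. fst (snd e) = b}"
              unfolding S_def by auto
            then show ?thesis using cyc_deg_Inr[of "ms ! i" "Cs ! i" b] cyc it by simp
          next
            case False
            then have "S i \<inter> B = {}" using resp i by blast
            then have "\<forall>e\<in>Cs ! i. fst e \<notin> B" unfolding S_def by blast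
            then have E0: "{e \<in> Cs ! i. fst (snd e) = b \<and> fst e \<in> B} = {}" by blast
            show ?thesis unfolding E0 by simp
          qed
        qed
        ultimately show False using evs b by simp
      qed
    qed
    have CB: "card (S p) \<le> 1 + (\<Sum>j\<in>J. card (S j) - 1)"
      by (rule conn_bound[OF finJ finS finA conn])
    have hpos: "\<And>j. j \<in> J \<Longrightarrow> card (S j) \<ge> 1"
    proof -
      fix j assume "j \<in> J"
      then have jt: "j < t" unfolding J_def by simp
      then show "card (S j) \<ge> 1" using cyc_half_Inl[of "ms ! j" "Cs ! j"] cyc ms2[OF jt]
        unfolding S_def by simp
    qed
    have s1: "(\<Sum>j\<in>J. card (S j) - 1) + card J = (\<Sum>j\<in>J. card (S j))"
    proof -
      have "(\<Sum>j\<in>J. card (S j) - 1 + 1) = (\<Sum>j\<in>J. card (S j) - 1) + (\<Sum>j\<in>J. 1)"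
        by (rule sum.distrib)
      then have "(\<Sum>j\<in>J. card (S j) - 1) + card J = (\<Sum>j\<in>J. card (S j) - 1 + 1)"
        by simp
      also have "\<dots> = (\<Sum>j\<in>J. card (S j))"
      proof (rule sum.cong)
        fix j assume "j \<in> J"
        then have "card (S j) \<ge> 1" by (rule hpos)
        then show "card (S j) - 1 + 1 = card (S j)" by simp
      qed simp
      finally show ?thesis .
    qed
    have cJ: "card J = t - 1" unfolding J_def using p by simp
    have msS: "\<And>i. i < t \<Longrightarrow> ms ! i = 2 * card (S i)"
      unfolding S_def using cyc cyc_half_Inl by blast
    have "(\<Sum>i<t. ms ! i) = ms ! p + (\<Sum>i\<in>J. ms ! i)"
      unfolding J_def using sum.remove[of "{..<t}" p] p by simp
    also have "(\<Sum>i\<in>J. ms ! i) = (\<Sum>i\<in>J. 2 * card (S i))"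
      by (rule sum.cong) (auto simp: J_def msS)
    finally have "v * (u * lam) = ms ! p + 2 * (\<Sum>i\<in>J. card (S i))"
      using tot by (simp add: sum_distrib_left)
    then have key: "2 * t + 2 * (ms ! p) \<le> v * (u * lam) + 4"
      using CB s1 cJ msS[OF p] tpos by linarith
    have "real (2 * t + 2 * (ms ! p)) \<le> real (v * (u * lam) + 4)" using key by linarith
    then show "real t \<le> real lam / 2 * real v * real u - real (ms ! p) + 2"
      by (simp add: field_simps)
  qed
  have d: "odd lam \<longrightarrow> 2 * nu 2 ms \<le> (lam - 1) * v * u"
  proof
    assume od: "odd lam"
    define I2 where "I2 = {i. i < t \<and> ms ! i = 2}"
    define U2 where "U2 = (\<Union>i\<in>I2. Cs ! i)"
    have fI2: "finite I2" unfolding I2_def by simp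
    have "card U2 = (\<Sum>i\<in>I2. card (Cs ! i))"
      unfolding U2_def by (rule card_UN_disjoint) (use fI2 fin disj in \<open>auto simp: I2_def\<close>)
    also have "\<dots> = (\<Sum>i\<in>I2. 2)" by (rule sum.cong) (use cyc cyc_finite in \<open>auto simp: I2_def\<close>)
    finally have cU: "card U2 = 2 * nu 2 ms" unfolding I2_def nu_def t_def by simp
    have U2E: "U2 \<subseteq> E" unfolding U2_def I2_def using sub by auto
    have fU2: "finite U2" using U2E E_finite finite_subset unfolding E_def by blast
    define f where "f e = (fst e, fst (snd e))" for e :: edge
    have fib: "\<And>q. q \<in> f ` U2 \<Longrightarrow> card {e \<in> U2. f e = q} \<le> lam - 1"
    proof -
      fix q assume q: "q \<in> f ` U2"
      obtain a b where ab: "q = (a, b)" by fastforce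
      have ab2: "a < v" "b < u" using q U2E unfolding ab f_def E_def E_eq by auto
      have eqs: "{e \<in> U2. f e = q} = (\<Union>i\<in>I2. {e \<in> Cs ! i. fst e = a \<and> fst (snd e) = b})"
        unfolding U2_def ab f_def by auto
      have "card {e \<in> U2. f e = q} = (\<Sum>i\<in>I2. card {e \<in> Cs ! i. fst e = a \<and> fst (snd e) = b})"
        unfolding eqs by (rule card_UN_disjoint) (use fI2 fin disj in \<open>auto simp: I2_def\<close>)
      also have "even \<dots>"
        by (rule dvd_sum) (use cyc two_cycle_even in \<open>auto simp: I2_def\<close>)
      finally have evq: "even (card {e \<in> U2. f e = q})" .
      have "{e \<in> U2. f e = q} \<subseteq> {e \<in> E. fst e = a \<and> fst (snd e) = b}"
        using U2E unfolding ab f_def by auto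
      then have "card {e \<in> U2. f e = q} \<le> card {e \<in> E. fst e = a \<and> fst (snd e) = b}"
        by (intro card_mono) (auto simp: E_def E_finite)
      also have "\<dots> = lam" unfolding E_def using E_fiber_pair ab2 by blast
      finally have le: "card {e \<in> U2. f e = q} \<le> lam" .
      have "card {e \<in> U2. f e = q} \<noteq> lam" using evq od by auto
      then show "card {e \<in> U2. f e = q} \<le> lam - 1" using le by linarith
    qed
    have "card U2 = (\<Sum>q\<in>f ` U2. card {e \<in> U2. f e = q})" by (rule card_fibers[OF fU2])
    also have "\<dots> \<le> (\<Sum>q\<in>f ` U2. lam - 1)" by (rule sum_mono) (rule fib)
    also have "\<dots> = card (f ` U2) * (lam - 1)" by simp
    also have "card (f ` U2) \<le> v * u"
    proof -
      have "f ` U2 \<subseteq> {..<v} \<times> {..<u}" using U2E unfolding f_def E_def E_eq by auto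
      then have "card (f ` U2) \<le> card ({..<v} \<times> {..<u})" by (intro card_mono) auto
      then show ?thesis by (simp add: card_cartesian_product)
    qed
    then have "card (f ` U2) * (lam - 1) \<le> v * u * (lam - 1)" by (rule mult_right_mono) simp
    finally show "2 * nu 2 ms \<le> (lam - 1) * v * u" using cU by (simp add: mult_ac)
  qed
  show ?thesis using a1 a2 b1 b2 c d lastp unfolding t_def by simp
qed



end
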